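(* Let $\beta$ be an uncountable regular ordinal (so $\mathrm{cf}(\beta)>\omega$), let $j\in\{2,3,4\}$ and $k<j$. Then the ordinal space $\beta\cdot j+1$ is not cleavable over $\beta\cdot k+1$.
   Context: A space $X$ is cleavable over $Y$ if for every $A\subseteq X$ there is a continuous $f:X\to Y$ with $f(A)\cap f(X\setminus A)=\emptyset$. Ordinals carry the order topology; $\beta\cdot j$ is ordinal multiplication. *)

theory Defs
  imports "HOL-Analysis.Analysis"
begin

definition cleavable :: "'a topology \<Rightarrow> 'b topology \<Rightarrow> bool" where
  "cleavable X Y \<longleftrightarrow>
     (\<forall>A. A \<subseteq> topspace X \<longrightarrow>
        (\<exists>f. continuous_map X Y f \<and> f ` A \<inter> f ` (topspace X - A) = {}))"

definition order_topology_on :: "'b set \<Rightarrow> ('b \<Rightarrow> 'b \<Rightarrow> bool) \<Rightarrow> 'b topology" where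
  "order_topology_on S le = topology_generated_by
     (insert S ({{x \<in> S. le a x \<and> \<not> le x a} | a. a \<in> S} \<union>
                {{x \<in> S. le x a \<and> \<not> le a x} | a. a \<in> S}))"

text \<open>The ordinal beta*j+1, where beta is the order type of the well-order r:
j consecutive copies of beta (copy i consists of the points Inl (i, x)),
ordered lexicographically with the copy index first, followed by a top point Inr ().\<close>
definition ord_mult_succ_carrier :: "'a rel \<Rightarrow> nat \<Rightarrow> ((nat \<times> 'a) + unit) set" where
  "ord_mult_succ_carrier r j = {Inl (i, x) | i x. i < j \<and> x \<in> Field r} \<union> {Inr ()}"

definition ord_mult_succ_le :: "'a rel \<Rightarrow> ((nat \<times> 'a) + unit) \<Rightarrow> ((nat \<times> 'a) + unit) \<Rightarrow> bool" where
  "ord_mult_succ_le r p q = (case (p, q) of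
      (_, Inr _) \<Rightarrow> True
    | (Inr _, Inl _) \<Rightarrow> False
    | (Inl (i, x), Inl (i', y)) \<Rightarrow> i < i' \<or> (i = i' \<and> (x, y) \<in> r))"

definition ord_mult_succ_space :: "'a rel \<Rightarrow> nat \<Rightarrow> ((nat \<times> 'a) + unit) topology" where
  "ord_mult_succ_space r j = order_topology_on (ord_mult_succ_carrier r j) (ord_mult_succ_le r)"

end

theory Submission
  imports Defs "HOL-Library.Countable_Set_Type"
begin
unbundle cardinal_syntax



locale regc =
  fixes r :: "'a rel"
  assumes co: "Card_order r" and reg: "regularCard r" and unc: "\<not> countable (Field r)"
begin

abbreviation F where "F \<equiv> Field r"
definition rlt where "rlt x y \<longleftrightarrow> (x,y) \<in> r \<and> x \<noteq> y"

lemma WO: "Well_order r" using co unfolding card_order_on_def by simp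
lemma r_refl: "x \<in> F \<Longrightarrow> (x,x) \<in> r"
  using WO unfolding well_order_on_def linear_order_on_def partial_order_on_def preorder_on_def refl_on_def by blast
lemma r_trans: "(x,y) \<in> r \<Longrightarrow> (y,z) \<in> r \<Longrightarrow> (x,z) \<in> r"
  using WO unfolding well_order_on_def linear_order_on_def partial_order_on_def preorder_on_def trans_def by blast
lemma r_antisym: "(x,y) \<in> r \<Longrightarrow> (y,x) \<in> r \<Longrightarrow> x = y"
  using WO unfolding well_order_on_def linear_order_on_def partial_order_on_def antisym_def by blast
lemma r_total: "x \<in> F \<Longrightarrow> y \<in> F \<Longrightarrow> (x,y) \<in> r \<or> (y,x) \<in> r"
  using WO r_refl unfolding well_order_on_def linear_order_on_def total_on_def by metis
lemma r_F: "(x,y) \<in> r \<Longrightarrow> x \<in> F \<and> y \<in> F"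
  by (simp add: FieldI1 FieldI2)
lemma r_wf: "wf (r - Id)" using WO unfolding well_order_on_def by simp

lemma infF: "\<not> finite F" using unc uncountable_infinite by blast

lemma nomax: "a \<in> F \<Longrightarrow> \<exists>b\<in>F. rlt a b"
  using infinite_Card_order_limit[OF co infF] unfolding rlt_def by blast

lemma minimal: assumes "Q \<subseteq> F" "Q \<noteq> {}" shows "\<exists>z\<in>Q. \<forall>y\<in>Q. (z,y) \<in> r"
proof -
  obtain x where x: "x \<in> Q" using assms by blast
  from r_wf[unfolded wf_eq_minimal, rule_format, OF x]
  obtain z where z: "z \<in> Q" "\<And>y. (y,z) \<in> r - Id \<Longrightarrow> y \<notin> Q" by blast
  show ?thesis
  proof (intro bexI[OF _ z(1)] ballI)
    fix y assume "y \<in> Q"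
    then show "(z,y) \<in> r" using z assms r_total[of z y] r_refl[of z] by blast
  qed
qed

lemma rlt_trans: "rlt x y \<Longrightarrow> rlt y z \<Longrightarrow> rlt x z"
  unfolding rlt_def using r_trans r_antisym by blast
lemma rlt_le_trans: "rlt x y \<Longrightarrow> (y,z) \<in> r \<Longrightarrow> rlt x z"
  unfolding rlt_def using r_trans r_antisym by blast
lemma le_rlt_trans: "(x,y) \<in> r \<Longrightarrow> rlt y z \<Longrightarrow> rlt x z"
  unfolding rlt_def using r_trans r_antisym by blast
lemma not_rlt: "x \<in> F \<Longrightarrow> y \<in> F \<Longrightarrow> \<not> rlt x y \<Longrightarrow> (y,x) \<in> r"
  unfolding rlt_def using r_total r_refl by blast
lemma rlt_irrefl: "rlt x y \<Longrightarrow> (y,x) \<notin> r"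
  unfolding rlt_def using r_antisym by blast

lemma bounded: assumes "T \<subseteq> F" "|T| <o r" shows "\<exists>c\<in>F. \<forall>t\<in>T. rlt t c"
proof -
  have "\<not> cofinal T r"
  proof
    assume "cofinal T r"
    then have "|T| =o r" using reg assms(1) unfolding regularCard_def by blast
    then show False using assms(2) not_ordLess_ordIso by blast
  qed
  then obtain a where a: "a \<in> F" "\<forall>b\<in>T. a = b \<or> (a,b) \<notin> r" unfolding cofinal_def by blast
  have "\<forall>b\<in>T. (b,a) \<in> r"
  proof
    fix b assume b: "b \<in> T"
    then have bF: "b \<in> F" using assms(1) by blast
    show "(b,a) \<in> r" using a(2) b r_total[OF bF a(1)] r_refl[OF bF] by auto
  qed
  moreover obtain c where "c \<in> F" "rlt a c" using nomax a(1) by blast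
  ultimately show ?thesis using le_rlt_trans by blast
qed

lemma countable_less: assumes "countable T" shows "|T| <o r"
proof -
  have 1: "|T| \<le>o |UNIV::nat set|" using assms countable_card_of_nat by blast
  have "\<not> |F| \<le>o |UNIV::nat set|" using unc countable_card_of_nat by blast
  then have 2: "|UNIV::nat set| <o |F|" using not_ordLeq_iff_ordLess[OF card_of_Well_order card_of_Well_order] by blast
  have 3: "|F| =o r" using card_of_Field_ordIso co by blast
  show ?thesis using ordLeq_ordLess_trans[OF 1 ordLess_ordIso_trans[OF 2 3]] .
qed

lemma bounded_countable: "T \<subseteq> F \<Longrightarrow> countable T \<Longrightarrow> \<exists>c\<in>F. \<forall>t\<in>T. rlt t c"
  using bounded countable_less by blast

definition z0 where "z0 = (SOME z. z \<in> F \<and> (\<forall>x\<in>F. (z,x) \<in> r))"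
lemma z0: "z0 \<in> F" "x \<in> F \<Longrightarrow> (z0,x) \<in> r"
proof -
  have "F \<noteq> {}" using infF by auto
  then have "\<exists>z. z \<in> F \<and> (\<forall>x\<in>F. (z,x) \<in> r)" using minimal[of F] by blast
  then have "z0 \<in> F \<and> (\<forall>x\<in>F. (z0,x) \<in> r)" unfolding z0_def by (rule someI_ex)
  then show "z0 \<in> F" "x \<in> F \<Longrightarrow> (z0,x) \<in> r" by auto
qed
lemma not_rlt_z0: "\<not> rlt x z0"
  unfolding rlt_def using z0 r_F r_antisym by blast

lemma succ_ex: "x \<in> F \<Longrightarrow> \<exists>x'\<in>F. rlt x x' \<and> (\<forall>z\<in>F. rlt z x' \<longleftrightarrow> (z,x) \<in> r)"
proof -
  assume x: "x \<in> F"
  have "{b\<in>F. rlt x b} \<noteq> {}" using nomax[OF x] by blast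
  then obtain x' where x': "x' \<in> F" "rlt x x'" "\<forall>y\<in>{b\<in>F. rlt x b}. (x',y) \<in> r"
    using minimal[of "{b\<in>F. rlt x b}"] by blast
  have "\<forall>z\<in>F. rlt z x' \<longleftrightarrow> (z,x) \<in> r"
  proof (intro ballI iffI)
    fix z assume z: "z \<in> F" "rlt z x'"
    show "(z,x) \<in> r"
    proof (rule ccontr)
      assume "(z,x) \<notin> r"
      then have "rlt x z" using not_rlt[OF z(1) x] unfolding rlt_def by (metis x r_refl) 
      then have "(x',z) \<in> r" using x' z by blast
      then show False using z(2) rlt_irrefl by blast
    qed
  next
    fix z assume "z \<in> F" "(z,x) \<in> r" then show "rlt z x'" using le_rlt_trans x'(2) by blast
  qed
  then show ?thesis using x' by blast
qed

definition issucc where "issucc u \<longleftrightarrow> (\<exists>w. rlt w u \<and> \<not>(\<exists>v. rlt w v \<and> rlt v u))"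

lemma succ_cofinal: "t \<in> F \<Longrightarrow> \<exists>u\<in>F. rlt t u \<and> issucc u"
proof -
  assume t: "t \<in> F"
  obtain x' where x': "x' \<in> F" "rlt t x'" "\<forall>z\<in>F. rlt z x' \<longleftrightarrow> (z,t) \<in> r" using succ_ex[OF t] by blast
  have "issucc x'" unfolding issucc_def
  proof (intro exI[of _ t] conjI notI)
    show "rlt t x'" by fact
  next
    assume "\<exists>v. rlt t v \<and> rlt v x'"
    then obtain v where v: "rlt t v" "rlt v x'" by blast
    then have "v \<in> F" unfolding rlt_def using r_F by blast
    then have "(v,t) \<in> r" using x' v by blast
    then show False using v(1) rlt_irrefl by blast
  qed
  then show ?thesis using x' by blast
qed

lemma chain_mono:
  assumes "\<And>n. (g n, g (Suc n)) \<in> R" "\<And>n. (g n, g n) \<in> R" "trans R" "n \<le> m"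
  shows "(g n, g m) \<in> R"
  using assms(4)
proof (induction m rule: dec_induct)
  case base then show ?case using assms(2) .
next
  case (step m) then show ?case using assms(1,3) unfolding trans_def by blast
qed

lemma sup_seq:
  assumes sF: "\<And>n. s n \<in> F" and inc: "\<And>n. rlt (s n) (s (Suc n))"
  shows "\<exists>\<xi>\<in>F. (\<forall>n. rlt (s n) \<xi>) \<and> (\<forall>t. rlt t \<xi> \<longrightarrow> (\<exists>n. rlt t (s n))) \<and> \<not> issucc \<xi>"
proof -
  have rs: "range s \<subseteq> F" using sF by blast
  obtain c where c: "c \<in> F" "\<forall>t\<in>range s. rlt t c" using bounded_countable[OF rs] by blast
  let ?U = "{u\<in>F. \<forall>n. (s n, u) \<in> r}"
  have "c \<in> ?U" using c unfolding rlt_def by blast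
  then obtain \<xi> where xi: "\<xi> \<in> ?U" "\<forall>y\<in>?U. (\<xi>,y) \<in> r" using minimal[of ?U] by blast
  have 1: "\<forall>n. rlt (s n) \<xi>"
  proof
    fix n
    have "(s (Suc n), \<xi>) \<in> r" using xi by blast
    then show "rlt (s n) \<xi>" using inc rlt_le_trans by blast
  qed
  have 2: "\<forall>t. rlt t \<xi> \<longrightarrow> (\<exists>n. rlt t (s n))"
  proof (intro allI impI)
    fix t assume t: "rlt t \<xi>"
    then have tF: "t \<in> F" unfolding rlt_def using r_F by blast
    show "\<exists>n. rlt t (s n)"
    proof (rule ccontr)
      assume "\<not> ?thesis"
      then have "\<forall>n. (s n, t) \<in> r" using not_rlt tF sF by blast
      then have "t \<in> ?U" using tF by blast
      then have "(\<xi>,t) \<in> r" using xi by blast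
      then show False using t rlt_irrefl by blast
    qed
  qed
  have 3: "\<not> issucc \<xi>"
  proof
    assume "issucc \<xi>"
    then obtain w where w: "rlt w \<xi>" "\<not>(\<exists>v. rlt w v \<and> rlt v \<xi>)" unfolding issucc_def by blast
    then obtain n where "rlt w (s n)" using 2 by blast
    then show False using w 1 by blast
  qed
  have xiF: "\<xi> \<in> F" using xi(1) by blast
  show ?thesis by (rule bexI[of _ \<xi>]) (use 1 2 3 xiF in simp_all)
qed

lemma nonsucc_cofinal: assumes t: "t \<in> F" shows "\<exists>u\<in>F. rlt t u \<and> \<not> issucc u"
proof -
  define nx where "nx x = (SOME b. b \<in> F \<and> rlt x b)" for x
  have nx: "nx x \<in> F \<and> rlt x (nx x)" if x: "x \<in> F" for x
  proof -
    from nomax[OF x] have "\<exists>b. b \<in> F \<and> rlt x b" by blast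
    then show ?thesis unfolding nx_def by (rule someI_ex)
  qed
  define s where "s n = (nx ^^ n) t" for n
  have sS: "s (Suc n) = nx (s n)" for n by (simp add: s_def)
  have s0: "s 0 = t" by (simp add: s_def)
  have sF: "s n \<in> F" for n
  proof (induction n)
    case 0 then show ?case using s0 t by simp
  next
    case (Suc n) then show ?case using sS nx by simp
  qed
  have inc: "rlt (s n) (s (Suc n))" for n using nx[OF sF[of n]] sS by simp
  obtain \<xi> where xi: "\<xi> \<in> F" "\<forall>n. rlt (s n) \<xi>" "\<not> issucc \<xi>" using sup_seq[of s, OF sF inc] by blast
  have "rlt t \<xi>" using xi(2) s0 by metis
  then show ?thesis using xi by blast
qed

end

context regc begin

abbreviation C where "C n \<equiv> ord_mult_succ_carrier r n"
abbreviation le where "le \<equiv> ord_mult_succ_le r"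
abbreviation sp where "sp n \<equiv> ord_mult_succ_space r n"
definition ltX where "ltX p q \<longleftrightarrow> le p q \<and> \<not> le q p"

lemma pt_cases: obtains i x where "p = Inl (i,x)" | "p = Inr ()"
  by (cases p) auto

lemma le_simps[simp]:
  "le (Inl (i,x)) (Inl (i',y)) \<longleftrightarrow> i < i' \<or> (i = i' \<and> (x,y) \<in> r)"
  "le p (Inr u)"
  "\<not> le (Inr u) (Inl q)"
  unfolding ord_mult_succ_le_def by (cases p; auto)+

lemma C_simps[simp]:
  "Inl (i,x) \<in> C n \<longleftrightarrow> i < n \<and> x \<in> F"
  "Inr u \<in> C n"
  unfolding ord_mult_succ_carrier_def by auto

lemma ltX_simps[simp]:
  "ltX (Inl (i,x)) (Inl (i',y)) \<longleftrightarrow> i < i' \<or> (i = i' \<and> rlt x y)"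
  "ltX (Inl q) (Inr u)"
  "\<not> ltX (Inr u) p"
  unfolding ltX_def rlt_def using r_antisym by (auto elim: pt_cases[of p])

lemma le_trans: "le p q \<Longrightarrow> le q s \<Longrightarrow> le p s"
  by (cases p rule: pt_cases; cases q rule: pt_cases; cases s rule: pt_cases) (auto intro: r_trans)
lemma le_antisym: "le p q \<Longrightarrow> le q p \<Longrightarrow> p = q"
  by (cases p rule: pt_cases; cases q rule: pt_cases) (auto intro: r_antisym)
lemma le_total: "p \<in> C n \<Longrightarrow> q \<in> C n \<Longrightarrow> le p q \<or> le q p"
  by (cases p rule: pt_cases; cases q rule: pt_cases) (auto dest: r_total)
lemma le_refl: "p \<in> C n \<Longrightarrow> le p p"
  by (cases p rule: pt_cases) (auto intro: r_refl)

lemma ltX_le: "ltX p q \<Longrightarrow> le p q" unfolding ltX_def by simp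
lemma ltX_neq: "ltX p q \<Longrightarrow> p \<noteq> q" unfolding ltX_def by blast
lemma ltX_le_trans: "ltX p q \<Longrightarrow> le q s \<Longrightarrow> ltX p s" unfolding ltX_def using le_trans by blast
lemma le_ltX_trans: "le p q \<Longrightarrow> ltX q s \<Longrightarrow> ltX p s" unfolding ltX_def using le_trans by blast
lemma ltX_trans: "ltX p q \<Longrightarrow> ltX q s \<Longrightarrow> ltX p s" using ltX_le le_ltX_trans by blast
lemma not_ltX: "p \<in> C n \<Longrightarrow> q \<in> C n \<Longrightarrow> \<not> ltX p q \<Longrightarrow> le q p"
  unfolding ltX_def using le_total by blast
lemma le_neq_ltX: "le p q \<Longrightarrow> p \<noteq> q \<Longrightarrow> ltX p q"
  unfolding ltX_def using le_antisym by blast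
lemma ltX_not_le: "ltX p q \<Longrightarrow> \<not> le q p" unfolding ltX_def by blast

definition SB where "SB n = insert (C n) ({{x \<in> C n. le a x \<and> \<not> le x a} | a. a \<in> C n} \<union>
                {{x \<in> C n. le x a \<and> \<not> le a x} | a. a \<in> C n})"

lemma sp_eq: "sp n = topology_generated_by (SB n)"
  unfolding ord_mult_succ_space_def order_topology_on_def SB_def by simp

lemma topspace_sp[simp]: "topspace (sp n) = C n"
  unfolding sp_eq topology_generated_by_topspace SB_def by auto

lemma open_C: "openin (sp n) (C n)"
  unfolding sp_eq by (rule topology_generated_by_Basis) (simp add: SB_def)

lemma open_gt: "a \<in> C n \<Longrightarrow> openin (sp n) {x \<in> C n. ltX a x}"
  unfolding sp_eq ltX_def by (rule topology_generated_by_Basis) (auto simp add: SB_def)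

lemma open_lt: "a \<in> C n \<Longrightarrow> openin (sp n) {x \<in> C n. ltX x a}"
  unfolding sp_eq ltX_def by (rule topology_generated_by_Basis) (auto simp add: SB_def)

lemma open_le: assumes y: "y \<in> C n" shows "openin (sp n) {w \<in> C n. le w y}"
proof (cases y rule: pt_cases)
  case (1 m x)
  then have mx: "m < n" "x \<in> F" using y by auto
  obtain x' where x': "x' \<in> F" "rlt x x'" "\<forall>z\<in>F. rlt z x' \<longleftrightarrow> (z,x) \<in> r" using succ_ex[OF mx(2)] by blast
  have "{w \<in> C n. le w y} = {w \<in> C n. ltX w (Inl (m,x'))}"
  proof (intro Collect_cong conj_cong refl)
    fix w assume w: "w \<in> C n"
    show "le w y = ltX w (Inl (m, x'))"
      using w x' 1 by (cases w rule: pt_cases) auto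
  qed
  then show ?thesis using open_lt[of "Inl (m,x')" n] mx x' by simp
next
  case 2
  then have "{w \<in> C n. le w y} = C n" by auto
  then show ?thesis using open_C by simp
qed

lemma open_nbhd: "b \<in> C n \<Longrightarrow> y \<in> C n \<Longrightarrow> openin (sp n) {w \<in> C n. ltX b w \<and> le w y}"
proof -
  assume "b \<in> C n" "y \<in> C n"
  then have "openin (sp n) ({w \<in> C n. ltX b w} \<inter> {w \<in> C n. le w y})"
    using open_gt open_le by blast
  moreover have "{w \<in> C n. ltX b w} \<inter> {w \<in> C n. le w y} = {w \<in> C n. ltX b w \<and> le w y}" by blast
  ultimately show ?thesis by simp
qed

lemma leftnbhd_gen:
  assumes "generate_topology_on (SB n) U"
  shows "\<forall>p\<in>U. p \<in> C n \<longrightarrow> (\<exists>c0\<in>C n. ltX c0 p) \<longrightarrow> (\<exists>c\<in>C n. ltX c p \<and> {q\<in>C n. ltX c q \<and> le q p} \<subseteq> U)"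
  using assms
proof (induction rule: generate_topology_on.induct)
  case Empty
  then show ?case by simp
next
  case (Int a b)
  show ?case
  proof (intro ballI impI)
    fix p assume p: "p \<in> a \<inter> b" "p \<in> C n" "\<exists>c0\<in>C n. ltX c0 p"
    obtain c1 where c1: "c1 \<in> C n" "ltX c1 p" "{q\<in>C n. ltX c1 q \<and> le q p} \<subseteq> a" using Int.IH(1) p by blast
    obtain c2 where c2: "c2 \<in> C n" "ltX c2 p" "{q\<in>C n. ltX c2 q \<and> le q p} \<subseteq> b" using Int.IH(2) p by blast
    show "\<exists>c\<in>C n. ltX c p \<and> {q\<in>C n. ltX c q \<and> le q p} \<subseteq> a \<inter> b"
    proof (cases "le c1 c2")
      case True
      have "{q\<in>C n. ltX c2 q \<and> le q p} \<subseteq> a" using c1(3) le_ltX_trans[OF True] by blast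
      then show ?thesis using c2 by blast
    next
      case False
      then have "le c2 c1" using le_total c1(1) c2(1) by blast
      then have "{q\<in>C n. ltX c1 q \<and> le q p} \<subseteq> b" using c2(3) le_ltX_trans by blast
      then show ?thesis using c1 by blast
    qed
  qed
next
  case (UN K)
  show ?case
  proof (intro ballI impI)
    fix p assume p: "p \<in> \<Union>K" "p \<in> C n" "\<exists>c0\<in>C n. ltX c0 p"
    then obtain k where k: "k \<in> K" "p \<in> k" by blast
    then obtain c where "c\<in>C n" "ltX c p" "{q\<in>C n. ltX c q \<and> le q p} \<subseteq> k" using UN.IH p by blast
    then show "\<exists>c\<in>C n. ltX c p \<and> {q\<in>C n. ltX c q \<and> le q p} \<subseteq> \<Union>K" using k by blast
  qed
next
  case (Basis s)
  show ?case
  proof (intro ballI impI)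
    fix p assume p: "p \<in> s" "p \<in> C n" "\<exists>c0\<in>C n. ltX c0 p"
    then obtain c0 where c0: "c0 \<in> C n" "ltX c0 p" by blast
    consider "s = C n" | a where "a \<in> C n" "s = {x \<in> C n. ltX a x}" | a where "a \<in> C n" "s = {x \<in> C n. ltX x a}"
      using Basis unfolding SB_def ltX_def by blast
    then show "\<exists>c\<in>C n. ltX c p \<and> {q\<in>C n. ltX c q \<and> le q p} \<subseteq> s"
    proof cases
      case 1 then show ?thesis using c0 by blast
    next
      case (2 a) then show ?thesis using p by blast
    next
      case (3 a)
      then have "ltX p a" using p by blast
      then have "{q\<in>C n. ltX c0 q \<and> le q p} \<subseteq> s" using 3 le_ltX_trans by blast
      then show ?thesis using c0 by blast
    qed
  qed
qed

lemma leftnbhd: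
  assumes "openin (sp n) U" "p \<in> U" "c0 \<in> C n" "ltX c0 p"
  shows "\<exists>c\<in>C n. ltX c p \<and> {q\<in>C n. ltX c q \<and> le q p} \<subseteq> U"
proof -
  have g: "generate_topology_on (SB n) U" using assms(1) unfolding sp_eq openin_topology_generated_by_iff .
  have "p \<in> C n" using assms(1,2) openin_subset by fastforce
  then show ?thesis using leftnbhd_gen[OF g] assms by blast
qed

end

context regc begin

definition inA :: "nat \<Rightarrow> (nat \<times> 'a) + unit \<Rightarrow> bool" where
  "inA j p = (case p of Inl (i,u) \<Rightarrow> (if u = z0 then 0 < i \<and> odd (i - 1) else (\<not> issucc u \<longleftrightarrow> 2 \<le> i))
                    | Inr _ \<Rightarrow> odd (j - 1))"

definition pt :: "nat \<Rightarrow> nat \<Rightarrow> (nat \<times> 'a) + unit" where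
  "pt j i = (if Suc i < j then Inl (Suc i, z0) else Inr ())"

end

locale mainloc = regc r for r :: "'a rel" +
  fixes j k :: nat and f :: "(nat \<times> 'a) + unit \<Rightarrow> (nat \<times> 'a) + unit"
  assumes j2: "2 \<le> j" and j4: "j \<le> 4" and kj: "k < j"
    and cont: "continuous_map (sp j) (sp k) f"
    and key: "\<And>p q. p \<in> C j \<Longrightarrow> q \<in> C j \<Longrightarrow> f p = f q \<Longrightarrow> inA j p = inA j q"
begin

lemma fC: "p \<in> C j \<Longrightarrow> f p \<in> C k"
  using cont unfolding continuous_map_def by auto

lemma fopen: "openin (sp k) V \<Longrightarrow> openin (sp j) {x \<in> C j. f x \<in> V}"
  using cont unfolding continuous_map_def by auto

lemma pt_C: "pt j i \<in> C j" unfolding pt_def using z0 by auto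
lemma pt_inA: assumes "i < j" shows "inA j (pt j i) = odd i"
proof (cases "Suc i < j")
  case True then show ?thesis unfolding pt_def inA_def by simp
next
  case False then have "j - 1 = i" using assms by arith
  then show ?thesis using False unfolding pt_def inA_def by simp
qed
lemma pt_nonmin: "i < j \<Longrightarrow> ltX (Inl (i,z0)) (pt j i)"
  unfolding pt_def by auto
lemma le_pt: "u \<in> F \<Longrightarrow> le (Inl (i,u)) (pt j i)"
  unfolding pt_def by auto
lemma inA_Inl: "u \<noteq> z0 \<Longrightarrow> inA j (Inl (i,u)) = (\<not> issucc u \<longleftrightarrow> 2 \<le> i)"
  unfolding inA_def by auto

lemma rlt_F: "rlt x y \<Longrightarrow> x \<in> F \<and> y \<in> F" unfolding rlt_def using r_F by blast

lemma maxF: "a \<in> F \<Longrightarrow> b \<in> F \<Longrightarrow> \<exists>m\<in>F. (a,m) \<in> r \<and> (b,m) \<in> r"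
  using r_total r_refl by blast

lemma conv:
  assumes i: "i < j" and V: "openin (sp k) V" and y: "f (pt j i) \<in> V"
  shows "\<exists>t\<in>F. \<forall>u\<in>F. rlt t u \<longrightarrow> f (Inl (i,u)) \<in> V"
proof -
  let ?W = "{x \<in> C j. f x \<in> V}"
  have W: "openin (sp j) ?W" using fopen[OF V] .
  have p: "pt j i \<in> ?W" using pt_C y by blast
  have c0: "Inl (i,z0) \<in> C j" using i z0 by simp
  obtain c where c: "c \<in> C j" "ltX c (pt j i)" "{q\<in>C j. ltX c q \<and> le q (pt j i)} \<subseteq> ?W"
    using leftnbhd[OF W p c0 pt_nonmin[OF i]] by blast
  obtain i2 t2 where c2: "c = Inl (i2,t2)" using c(2) by (cases c rule: pt_cases) auto
  have t2: "t2 \<in> F" "i2 < j" using c(1) c2 by auto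
  have i2: "i2 \<le> i"
  proof (cases "Suc i < j")
    case True then show ?thesis using c(2) c2 not_rlt_z0 unfolding pt_def by auto
  next
    case False then show ?thesis using t2 by simp
  qed
  define t where "t = (if i2 = i then t2 else z0)"
  have tF: "t \<in> F" unfolding t_def using t2 z0 by simp
  have "\<forall>u\<in>F. rlt t u \<longrightarrow> f (Inl (i,u)) \<in> V"
  proof (intro ballI impI)
    fix u assume u: "u \<in> F" "rlt t u"
    have "ltX c (Inl (i,u))" using c2 i2 u unfolding t_def by (auto split: if_splits)
    moreover have "Inl (i,u) \<in> C j" using i u by simp
    moreover have "le (Inl (i,u)) (pt j i)" using le_pt u by blast
    ultimately show "f (Inl (i,u)) \<in> V" using c(3) by blast
  qed
  then show ?thesis using tF by blast
qed

lemma good: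
  assumes i: "i < j" and t: "t \<in> F"
  shows "\<exists>u\<in>F. rlt t u \<and> ltX (f (Inl (i,u))) (f (pt j i))"
proof -
  let ?y = "f (pt j i)"
  have yC: "?y \<in> C k" using fC pt_C by blast
  let ?V = "{w \<in> C k. le w ?y}"
  have "?y \<in> ?V" using yC le_refl by blast
  then obtain t1 where t1: "t1 \<in> F" "\<forall>u\<in>F. rlt t1 u \<longrightarrow> f (Inl (i,u)) \<in> ?V"
    using conv[OF i open_le[OF yC]] by blast
  obtain m where m: "m \<in> F" "(t,m) \<in> r" "(t1,m) \<in> r" using maxF[OF t t1(1)] by blast
  obtain u where u: "u \<in> F" "rlt m u" "(\<not> issucc u) = ((2 \<le> i) = (\<not> odd i))"
  proof (cases "(2 \<le> i) = (\<not> odd i)")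
    case True then show ?thesis using that nonsucc_cofinal[OF m(1)] by blast
  next
    case False then show ?thesis using that succ_cofinal[OF m(1)] by blast
  qed
  have uz: "u \<noteq> z0" using u(2) not_rlt_z0 by blast
  have "inA j (Inl (i,u)) \<noteq> odd i" using inA_Inl[OF uz] u(3) by auto
  then have "inA j (Inl (i,u)) \<noteq> inA j (pt j i)" using pt_inA[OF i] by simp
  then have ne: "f (Inl (i,u)) \<noteq> ?y" using key[of "Inl (i,u)" "pt j i"] pt_C i u(1) by auto
  have "f (Inl (i,u)) \<in> ?V" using t1 u le_rlt_trans m(3) by blast
  then have "ltX (f (Inl (i,u))) ?y" using ne le_neq_ltX by blast
  moreover have "rlt t u" using le_rlt_trans m(2) u(2) by blast
  ultimately show ?thesis using u(1) by blast
qed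

lemma step:
  assumes i: "i < j" and x: "x \<in> F" and b: "b \<in> C k" and byh: "ltX b (f (pt j i))"
  shows "\<exists>u\<in>F. rlt x u \<and> ltX b (f (Inl (i,u))) \<and> ltX (f (Inl (i,u))) (f (pt j i))"
proof -
  let ?y = "f (pt j i)"
  have yC: "?y \<in> C k" using fC pt_C by blast
  let ?V = "{w \<in> C k. ltX b w \<and> le w ?y}"
  have "?y \<in> ?V" using yC le_refl byh by blast
  then obtain t1 where t1: "t1 \<in> F" "\<forall>u\<in>F. rlt t1 u \<longrightarrow> f (Inl (i,u)) \<in> ?V"
    using conv[OF i open_nbhd[OF b yC]] by blast
  obtain m where m: "m \<in> F" "(x,m) \<in> r" "(t1,m) \<in> r" using maxF[OF x t1(1)] by blast
  obtain u where u: "u \<in> F" "rlt m u" "ltX (f (Inl (i,u))) ?y" using good[OF i m(1)] by blast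
  have "f (Inl (i,u)) \<in> ?V" using t1 u le_rlt_trans m(3) by blast
  moreover have "rlt x u" using le_rlt_trans m(2) u(2) by blast
  ultimately show ?thesis using u by blast
qed

lemma classify:
  assumes i: "i < j"
  shows "f (pt j i) = Inr () \<or> (\<exists>m. 0 < m \<and> m < k \<and> f (pt j i) = Inl (m,z0))"
proof (rule ccontr)
  assume nc: "\<not> ?thesis"
  let ?y = "f (pt j i)"
  have yC: "?y \<in> C k" using fC pt_C by blast
  obtain m x0 where y: "?y = Inl (m,x0)" using nc by (cases ?y rule: pt_cases) auto
  have mx: "m < k" "x0 \<in> F" using yC y by auto
  have mz: "m = 0 \<or> x0 \<noteq> z0" using nc y mx by auto
  define D where "D = {z \<in> F. rlt z x0}"
  have D_eq: "D = underS r x0" unfolding D_def underS_def rlt_def using r_F by auto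
  have Dl: "|D| <o r" unfolding D_eq using card_of_underS[OF co mx(2)] .
  have ex: "\<forall>z\<in>D. \<exists>t. t \<in> F \<and> (\<forall>u\<in>F. rlt t u \<longrightarrow> f (Inl (i,u)) \<in> {w \<in> C k. ltX (Inl (m,z)) w \<and> le w ?y})"
  proof
    fix z assume z: "z \<in> D"
    have bC: "Inl (m,z) \<in> C k" using z mx unfolding D_def by simp
    have "?y \<in> {w \<in> C k. ltX (Inl (m,z)) w \<and> le w ?y}" using yC le_refl z y r_refl unfolding D_def by auto
    then show "\<exists>t. t \<in> F \<and> (\<forall>u\<in>F. rlt t u \<longrightarrow> f (Inl (i,u)) \<in> {w \<in> C k. ltX (Inl (m,z)) w \<and> le w ?y})"
      using conv[OF i open_nbhd[OF bC yC]] by blast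
  qed
  obtain tt where tt: "\<forall>z\<in>D. tt z \<in> F \<and> (\<forall>u\<in>F. rlt (tt z) u \<longrightarrow> f (Inl (i,u)) \<in> {w \<in> C k. ltX (Inl (m,z)) w \<and> le w ?y})"
    using bchoice[OF ex] by blast
  have "|tt ` D| \<le>o |D|" by (rule card_of_image)
  then have Tl: "|tt ` D| <o r" using ordLeq_ordLess_trans[OF _ Dl] by blast
  have tD: "tt ` D \<subseteq> F" using tt by auto
  obtain c1 where c1': "c1 \<in> F" "\<forall>t\<in>tt ` D. rlt t c1" using bounded[OF tD Tl] by blast
  have c1: "c1 \<in> F" "\<forall>z\<in>D. rlt (tt z) c1" using c1' by auto
  obtain u where u: "u \<in> F" "rlt c1 u" "ltX (f (Inl (i,u))) ?y" using good[OF i c1(1)] by blast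
  let ?w = "f (Inl (i,u))"
  have wz: "\<forall>z\<in>D. ltX (Inl (m,z)) ?w"
  proof
    fix z assume z: "z \<in> D"
    then have "rlt (tt z) u" using c1 u rlt_trans by blast
    then show "ltX (Inl (m,z)) ?w" using tt z u(1) by blast
  qed
  have wC: "?w \<in> C k" using fC i u(1) by simp
  obtain m' w' where w: "?w = Inl (m',w')" using u(3) by (cases ?w rule: pt_cases) auto
  have w'F: "w' \<in> F" using wC w by simp
  have "m' < m \<or> (m' = m \<and> rlt w' x0)" using u(3) w y by simp
  then show False
  proof
    assume "m' < m"
    then have "x0 \<noteq> z0" using mz by simp
    then have "z0 \<in> D" unfolding D_def rlt_def using z0 mx by auto
    then have "ltX (Inl (m,z0)) ?w" using wz by blast
    then show False using w \<open>m' < m\<close> by simp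
  next
    assume "m' = m \<and> rlt w' x0"
    then have "w' \<in> D" unfolding D_def using w'F by simp
    then have "ltX (Inl (m,w')) ?w" using wz \<open>m' = m \<and> rlt w' x0\<close> by blast
    then show False using w \<open>m' = m \<and> rlt w' x0\<close> ltX_neq by (auto simp: rlt_def)
  qed
qed

end

context mainloc begin

lemma r_trans': "trans r" using r_trans unfolding trans_def by blast

lemma lub:
  assumes i: "i < j" and sF: "\<And>n. s n \<in> F" and incs: "\<And>n. rlt (s n) (s (Suc n))"
    and inca: "\<And>n. ltX (f (Inl (i, s n))) (f (Inl (i, s (Suc n))))"
    and xi: "\<xi> \<in> F" "\<forall>n. rlt (s n) \<xi>" "\<forall>t. rlt t \<xi> \<longrightarrow> (\<exists>n. rlt t (s n))"
  shows "(\<forall>n. le (f (Inl (i, s n))) (f (Inl (i,\<xi>)))) \<and>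
         (\<forall>w\<in>C k. (\<forall>n. le (f (Inl (i, s n))) w) \<longrightarrow> le (f (Inl (i,\<xi>))) w)"
proof -
  define a where "a n = f (Inl (i, s n))" for n
  let ?P = "Inl (i,\<xi>)"
  let ?z = "f ?P"
  have PC: "?P \<in> C j" using i xi by simp
  have zC: "?z \<in> C k" using fC PC by blast
  have aC: "a n \<in> C k" for n unfolding a_def using fC i sF by simp
  have mono_s: "n \<le> m \<Longrightarrow> (s n, s m) \<in> r" for n m
    using chain_mono[of s r, OF _ _ r_trans'] incs r_refl sF unfolding rlt_def by blast
  have mono_a: "n \<le> m \<Longrightarrow> le (a n) (a m)" for n m
  proof -
    assume nm: "n \<le> m"
    have tr: "trans {(p,q). le p q}" unfolding trans_def using le_trans by blast
    have "(a n, a m) \<in> {(p,q). le p q}"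
      using chain_mono[of a "{(p,q). le p q}", OF _ _ tr nm] inca ltX_le le_refl aC unfolding a_def by blast
    then show ?thesis by simp
  qed
  have c0: "Inl (i, s 0) \<in> C j" "ltX (Inl (i, s 0)) ?P" using i sF xi by auto
  have pick: "\<exists>m. rlt t0 (s m) \<and> ltX c (Inl (i, s m))" if c: "c \<in> C j" "ltX c ?P" and t0: "rlt t0 \<xi>" for c t0
  proof -
    obtain i2 t2 where c2: "c = Inl (i2,t2)" using c(2) by (cases c rule: pt_cases) auto
    have t2F: "t2 \<in> F" using c c2 by simp
    have t0F: "t0 \<in> F" using t0 rlt_F by blast
    have "i2 < i \<or> (i2 = i \<and> rlt t2 \<xi>)" using c(2) c2 by simp
    then show ?thesis
    proof
      assume "i2 < i"
      then show ?thesis using xi(3) t0 c2 by auto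
    next
      assume h: "i2 = i \<and> rlt t2 \<xi>"
      obtain tm where tm: "tm \<in> F" "(t2,tm) \<in> r" "(t0,tm) \<in> r" "tm = t2 \<or> tm = t0"
        using r_total[OF t2F t0F] r_refl t2F t0F by blast
      have "rlt tm \<xi>" using tm(4) h t0 by blast
      then obtain m where "rlt tm (s m)" using xi(3) by blast
      then have "rlt t2 (s m)" "rlt t0 (s m)" using tm le_rlt_trans by blast+
      then show ?thesis using c2 h by auto
    qed
  qed
  have inbox: "Inl (i, s m) \<in> C j \<and> le (Inl (i, s m)) ?P" for m
    using i sF xi(2) unfolding rlt_def by simp
  have part1: "\<forall>n. le (a n) ?z"
  proof
    fix n
    show "le (a n) ?z"
    proof (rule ccontr)
      assume "\<not> le (a n) ?z"
      then have lt: "ltX ?z (a n)" using not_ltX[OF zC aC] by blast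
      let ?V = "{v \<in> C k. ltX v (a n)}"
      have W: "openin (sp j) {x \<in> C j. f x \<in> ?V}" using fopen[OF open_lt[OF aC]] .
      have "?P \<in> {x \<in> C j. f x \<in> ?V}" using PC zC lt by simp
      then obtain c where c: "c \<in> C j" "ltX c ?P" "{q\<in>C j. ltX c q \<and> le q ?P} \<subseteq> {x \<in> C j. f x \<in> ?V}"
        using leftnbhd[OF W _ c0] by blast
      obtain m where m: "rlt (s n) (s m)" "ltX c (Inl (i, s m))" using pick[OF c(1,2)] xi(2) by blast
      have "ltX (a m) (a n)" using c(3) inbox[of m] m(2) unfolding a_def by blast
      moreover have "n \<le> m"
      proof (rule ccontr)
        assume "\<not> n \<le> m"
        then have "(s m, s n) \<in> r" using mono_s by simp
        then show False using m(1) rlt_irrefl by blast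
      qed
      ultimately show False using mono_a ltX_not_le by blast
    qed
  qed
  have part2: "\<forall>w\<in>C k. (\<forall>n. le (a n) w) \<longrightarrow> le ?z w"
  proof (intro ballI impI)
    fix w assume w: "w \<in> C k" "\<forall>n. le (a n) w"
    show "le ?z w"
    proof (rule ccontr)
      assume "\<not> le ?z w"
      then have lt: "ltX w ?z" using not_ltX[OF w(1) zC] by blast
      let ?V = "{v \<in> C k. ltX w v}"
      have W: "openin (sp j) {x \<in> C j. f x \<in> ?V}" using fopen[OF open_gt[OF w(1)]] .
      have "?P \<in> {x \<in> C j. f x \<in> ?V}" using PC zC lt by simp
      then obtain c where c: "c \<in> C j" "ltX c ?P" "{q\<in>C j. ltX c q \<and> le q ?P} \<subseteq> {x \<in> C j. f x \<in> ?V}"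
        using leftnbhd[OF W _ c0] by blast
      obtain m where m: "ltX c (Inl (i, s m))" using pick[OF c(1,2)] xi(2) by blast
      have "ltX w (a m)" using c(3) inbox[of m] m unfolding a_def by blast
      then show False using w(2) ltX_not_le by blast
    qed
  qed
  show ?thesis using part1 part2 unfolding a_def by blast
qed

end

context mainloc begin

lemma seq:
  assumes i: "i < j" and i': "i' < j" and eq: "f (pt j i) = f (pt j i')"
  shows "\<exists>\<xi> \<eta>. \<xi> \<in> F \<and> \<eta> \<in> F \<and> \<xi> \<noteq> z0 \<and> \<eta> \<noteq> z0 \<and> \<not> issucc \<xi> \<and> \<not> issucc \<eta>
     \<and> f (Inl (i,\<xi>)) = f (Inl (i',\<eta>))"
proof -
  define y where "y = f (pt j i)"
  have y': "y = f (pt j i')" using eq y_def by simp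
  define g1 where "g1 u = f (Inl (i,u))" for u
  define g2 where "g2 u = f (Inl (i',u))" for u
  have g1C: "u \<in> F \<Longrightarrow> g1 u \<in> C k" for u unfolding g1_def using fC i by simp
  have g2C: "u \<in> F \<Longrightarrow> g2 u \<in> C k" for u unfolding g2_def using fC i' by simp
  define st1 where "st1 x b = (SOME u. u \<in> F \<and> rlt x u \<and> ltX b (g1 u) \<and> ltX (g1 u) y)" for x b
  define st2 where "st2 x b = (SOME u. u \<in> F \<and> rlt x u \<and> ltX b (g2 u) \<and> ltX (g2 u) y)" for x b
  have st1: "st1 x b \<in> F \<and> rlt x (st1 x b) \<and> ltX b (g1 (st1 x b)) \<and> ltX (g1 (st1 x b)) y"
    if "x \<in> F" "b \<in> C k" "ltX b y" for x b
  proof -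
    have "\<exists>u. u \<in> F \<and> rlt x u \<and> ltX b (g1 u) \<and> ltX (g1 u) y"
      using step[OF i that(1,2)] that(3) unfolding y_def g1_def by blast
    then show ?thesis unfolding st1_def by (rule someI_ex)
  qed
  have st2: "st2 x b \<in> F \<and> rlt x (st2 x b) \<and> ltX b (g2 (st2 x b)) \<and> ltX (g2 (st2 x b)) y"
    if "x \<in> F" "b \<in> C k" "ltX b y" for x b
  proof -
    have "\<exists>u. u \<in> F \<and> rlt x u \<and> ltX b (g2 u) \<and> ltX (g2 u) y"
      using step[OF i' that(1,2)] that(3) unfolding y' g2_def by blast
    then show ?thesis unfolding st2_def by (rule someI_ex)
  qed
  obtain x0 where x0: "x0 \<in> F" "ltX (g1 x0) y" using good[OF i z0(1)] unfolding g1_def y_def by blast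
  define nxt where "nxt p = (let x = st1 (fst p) (g2 (snd p)) in (x, st2 (snd p) (g1 x)))" for p
  define sq where "sq n = (nxt ^^ n) (x0, st2 z0 (g1 x0))" for n
  have sq0: "sq 0 = (x0, st2 z0 (g1 x0))" by (simp add: sq_def)
  have sqS: "sq (Suc n) = nxt (sq n)" for n by (simp add: sq_def)
  define I where "I p \<longleftrightarrow> fst p \<in> F \<and> snd p \<in> F \<and> ltX (g1 (fst p)) y \<and> ltX (g2 (snd p)) y
      \<and> ltX (g1 (fst p)) (g2 (snd p))" for p
  have Inxt: "I (nxt p) \<and> rlt (fst p) (fst (nxt p)) \<and> rlt (snd p) (snd (nxt p))
     \<and> ltX (g2 (snd p)) (g1 (fst (nxt p)))" if "I p" for p
  proof -
    let ?x = "st1 (fst p) (g2 (snd p))"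
    have h1: "?x \<in> F \<and> rlt (fst p) ?x \<and> ltX (g2 (snd p)) (g1 ?x) \<and> ltX (g1 ?x) y"
      using st1 that g2C unfolding I_def by blast
    have h2: "st2 (snd p) (g1 ?x) \<in> F \<and> rlt (snd p) (st2 (snd p) (g1 ?x)) \<and> ltX (g1 ?x) (g2 (st2 (snd p) (g1 ?x)))
        \<and> ltX (g2 (st2 (snd p) (g1 ?x))) y"
      using st2[of "snd p" "g1 ?x"] that h1 g1C unfolding I_def by blast
    show ?thesis using h1 h2 unfolding nxt_def Let_def I_def by simp
  qed
  have I0: "I (sq 0)"
  proof -
    have "st2 z0 (g1 x0) \<in> F \<and> rlt z0 (st2 z0 (g1 x0)) \<and> ltX (g1 x0) (g2 (st2 z0 (g1 x0)))
        \<and> ltX (g2 (st2 z0 (g1 x0))) y" using st2[OF z0(1) g1C[OF x0(1)] x0(2)] .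
    then show ?thesis using x0 sq0 unfolding I_def by simp
  qed
  have Isq: "I (sq n)" for n
  proof (induction n)
    case 0 then show ?case using I0 .
  next
    case (Suc n) then show ?case using Inxt sqS by simp
  qed
  define xs where "xs n = fst (sq n)" for n
  define ys where "ys n = snd (sq n)" for n
  have xsF: "xs n \<in> F" and ysF: "ys n \<in> F" for n using Isq unfolding I_def xs_def ys_def by auto
  have incx: "rlt (xs n) (xs (Suc n))" and incy: "rlt (ys n) (ys (Suc n))"
    and ab: "ltX (g1 (xs n)) (g2 (ys n))" and ba: "ltX (g2 (ys n)) (g1 (xs (Suc n)))" for n
    using Inxt[OF Isq[of n]] Isq[of n] sqS[of n] unfolding xs_def ys_def I_def by auto
  have inca: "ltX (g1 (xs n)) (g1 (xs (Suc n)))" for n using ab ba ltX_trans by blast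
  have incb: "ltX (g2 (ys n)) (g2 (ys (Suc n)))" for n using ab ba ltX_trans by blast
  obtain \<xi> where xi: "\<xi> \<in> F" "\<forall>n. rlt (xs n) \<xi>" "\<forall>t. rlt t \<xi> \<longrightarrow> (\<exists>n. rlt t (xs n))" "\<not> issucc \<xi>"
    using sup_seq[of xs, OF xsF incx] by blast
  obtain \<eta> where eta: "\<eta> \<in> F" "\<forall>n. rlt (ys n) \<eta>" "\<forall>t. rlt t \<eta> \<longrightarrow> (\<exists>n. rlt t (ys n))" "\<not> issucc \<eta>"
    using sup_seq[of ys, OF ysF incy] by blast
  have L1: "(\<forall>n. le (g1 (xs n)) (g1 \<xi>)) \<and> (\<forall>w\<in>C k. (\<forall>n. le (g1 (xs n)) w) \<longrightarrow> le (g1 \<xi>) w)"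
    using lub[OF i xsF incx _ xi(1-3)] inca unfolding g1_def by blast
  have L2: "(\<forall>n. le (g2 (ys n)) (g2 \<eta>)) \<and> (\<forall>w\<in>C k. (\<forall>n. le (g2 (ys n)) w) \<longrightarrow> le (g2 \<eta>) w)"
    using lub[OF i' ysF incy _ eta(1-3)] incb unfolding g2_def by blast
  have "le (g1 \<xi>) (g2 \<eta>)"
  proof -
    have "\<forall>n. le (g1 (xs n)) (g2 \<eta>)" using ab L2 ltX_le le_trans by blast
    then show ?thesis using L1 g2C[OF eta(1)] by blast
  qed
  moreover have "le (g2 \<eta>) (g1 \<xi>)"
  proof -
    have "\<forall>n. le (g2 (ys n)) (g1 \<xi>)" using ba L1 ltX_le le_trans by blast
    then show ?thesis using L2 g1C[OF xi(1)] by blast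
  qed
  ultimately have "g1 \<xi> = g2 \<eta>" using le_antisym by blast
  moreover have "\<xi> \<noteq> z0" "\<eta> \<noteq> z0" using xi(2) eta(2) not_rlt_z0 by blast+
  ultimately show ?thesis using xi eta unfolding g1_def g2_def by blast
qed

lemma contradiction: False
proof -
  define Sp where "Sp = insert (Inr ()) ((\<lambda>m. Inl (m,z0)) ` {1..<k})"
  define g where "g i = f (pt j i)" for i
  have gS: "g ` {..<j} \<subseteq> Sp"
  proof
    fix y assume "y \<in> g ` {..<j}"
    then obtain i where i: "i < j" "y = g i" by blast
    then show "y \<in> Sp" using classify[OF i(1)] unfolding Sp_def g_def by auto
  qed
  have "card Sp \<le> Suc (card ((\<lambda>m. Inl (m,z0)) ` {1..<k} :: ((nat \<times> 'a) + unit) set))"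
    unfolding Sp_def by (rule card_insert_le_m1) (simp_all)
  moreover have "card ((\<lambda>m. Inl (m,z0)) ` {1..<k} :: ((nat \<times> 'a) + unit) set) \<le> k - 1"
    using card_image_le[of "{1..<k}" "\<lambda>m. Inl (m,z0)"] by simp
  ultimately have "card Sp < j" using kj j2 by linarith
  moreover have "finite Sp" unfolding Sp_def by simp
  ultimately have "\<not> inj_on g {..<j}"
    using card_inj_on_le[of g "{..<j}" Sp] gS by fastforce
  then obtain i i' where ii: "i < j" "i' < j" "i \<noteq> i'" "g i = g i'" unfolding inj_on_def by blast
  show False
  proof (cases "odd i = odd i'")
    case False
    have "inA j (pt j i) = inA j (pt j i')" using key[OF pt_C pt_C] ii(4) unfolding g_def by blast
    then show False using pt_inA ii False by simp
  next
    case True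
    have dif: "(2 \<le> i) \<noteq> (2 \<le> i')" using True ii j4 by presburger
    obtain \<xi> \<eta> where h: "\<xi> \<in> F" "\<eta> \<in> F" "\<xi> \<noteq> z0" "\<eta> \<noteq> z0" "\<not> issucc \<xi>" "\<not> issucc \<eta>"
      "f (Inl (i,\<xi>)) = f (Inl (i',\<eta>))" using seq[OF ii(1,2)] ii(4) unfolding g_def by blast
    have "inA j (Inl (i,\<xi>)) = inA j (Inl (i',\<eta>))" using key h ii by simp
    then show False using inA_Inl h dif by simp
  qed
qed

end

theorem lemma5p1:
  fixes r :: "'a rel" and j k :: nat
  assumes "Card_order r" and "regularCard r" and "\<not> countable (Field r)"
    and "j \<in> {2, 3, 4}" and "k < j"
  shows "\<not> cleavable (ord_mult_succ_space r j) (ord_mult_succ_space r k)"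
proof
  assume cl: "cleavable (ord_mult_succ_space r j) (ord_mult_succ_space r k)"
  interpret regc r using assms(1-3) by unfold_locales
  let ?A = "{p \<in> C j. inA j p}"
  have Asub: "?A \<subseteq> topspace (sp j)" by auto
  obtain f where f: "continuous_map (sp j) (sp k) f" "f ` ?A \<inter> f ` (topspace (sp j) - ?A) = {}"
    using cl Asub unfolding cleavable_def by blast
  have key: "inA j p = inA j q" if "p \<in> C j" "q \<in> C j" "f p = f q" for p q
  proof (rule ccontr)
    assume ne: "inA j p \<noteq> inA j q"
    show False
    proof (cases "inA j p")
      case True
      have 1: "f p \<in> f ` ?A" using True that(1) by blast
      have 2: "f q \<in> f ` (topspace (sp j) - ?A)" using True that(2) ne by auto
      show False using f(2) that(3) 1 2 by auto
    next
      case False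
      have 1: "f q \<in> f ` ?A" using False that(2) ne by blast
      have 2: "f p \<in> f ` (topspace (sp j) - ?A)" using False that(1) by auto
      show False using f(2) that(3) 1 2 by auto
    qed
  qed
  interpret mainloc r j k f
  proof
    show "2 \<le> j" "j \<le> 4" using assms(4) by auto
    show "k < j" by fact
    show "continuous_map (sp j) (sp k) f" by fact
    show "\<And>p q. p \<in> C j \<Longrightarrow> q \<in> C j \<Longrightarrow> f p = f q \<Longrightarrow> inA j p = inA j q" using key by blast
  qed
  show False by (rule contradiction)
qed

end
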